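(* Let $E$ be a nonzero real Banach space, $S\colon E\rightrightarrows E^*$ be closed, monotone and quasidense, and suppose $R(S^{\mathbb F})\subset\widehat E:=\{\widehat x:x\in E\}$. Then $G(S^{\mathbb F})=\{(x^*,\widehat x):(x,x^* )\in G(S)\}$.
   Context: $\widehat x\in E^{**}$ is the canonical image of $x$ ($\langle x^*,\widehat x\rangle=\langle x,x^*\rangle$). For a multifunction $S\colon E\rightrightarrows E^*$ with nonempty graph $G(S)$: closed means $G(S)$ norm-closed; monotone means $\langle s-t,s^*-t^*\rangle\ge0$ on $G(S)$; quasidense means for every $(x,x^* )$, $\inf_{(s,s^* )\in G(S)}[\tfrac12\|s-x\|^2+\tfrac12\|s^*-x^*\|^2+\langle s-x,s^*-x^*\rangle]\le0$. Let $\varphi_S(x,x^* )=\sup_{(s,s^* )\in G(S)}[\langle s,x^*\rangle+\langle x,s^*\rangle-\langle s,s^*\rangle]$ and $\varphi_S^*$ its conjugate on $E^*\times E^{**}$ under $\langle (x,x^* ),(y^*,y^{**})\rangle=\langle x,y^*\rangle+\langle x^*,y^{**}\rangle$. For $S$ closed, monotone, quasidense, the Fitzpatrick extension $S^{\mathbb F}\colon E^*\rightrightarrows E^{**}$ is given by $(y^*,y^{**})\in G(S^{\mathbb F})$ iff $\varphi_S^*(y^*,y^{**})=\langle y^*,y^{**}\rangle$; $R(S^{\mathbb F})$ is its range. *)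

theory Defs
  imports "HOL-Analysis.Analysis"
begin

(* E: type 'a::banach; E* = 'a =>L real; E** = (E* =>L real); S given by its graph G. *)

definition canon :: "'a::real_normed_vector \<Rightarrow> (('a \<Rightarrow>\<^sub>L real) \<Rightarrow>\<^sub>L real)" where
  "canon x = Blinfun (\<lambda>f. blinfun_apply f x)"

definition monotone_graph :: "('a::real_normed_vector \<times> ('a \<Rightarrow>\<^sub>L real)) set \<Rightarrow> bool" where
  "monotone_graph G \<longleftrightarrow>
     (\<forall>(s, s') \<in> G. \<forall>(t, t') \<in> G. blinfun_apply (s' - t') (s - t) \<ge> 0)"

definition quasidense :: "('a::real_normed_vector \<times> ('a \<Rightarrow>\<^sub>L real)) set \<Rightarrow> bool" where
  "quasidense G \<longleftrightarrow>
     (\<forall>x x'. (INF p\<in>G. (1/2) * (norm (fst p - x))\<^sup>2 + (1/2) * (norm (snd p - x'))\<^sup>2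
                       + blinfun_apply (snd p - x') (fst p - x)) \<le> (0::real))"

definition fitz :: "('a::real_normed_vector \<times> ('a \<Rightarrow>\<^sub>L real)) set
                     \<Rightarrow> 'a \<Rightarrow> ('a \<Rightarrow>\<^sub>L real) \<Rightarrow> ereal" where
  "fitz G x x' = (SUP p\<in>G. ereal (blinfun_apply x' (fst p) + blinfun_apply (snd p) x
                                   - blinfun_apply (snd p) (fst p)))"

definition fitz_conj :: "('a::real_normed_vector \<times> ('a \<Rightarrow>\<^sub>L real)) set
                     \<Rightarrow> ('a \<Rightarrow>\<^sub>L real) \<Rightarrow> (('a \<Rightarrow>\<^sub>L real) \<Rightarrow>\<^sub>L real) \<Rightarrow> ereal" where
  "fitz_conj G y' y'' = (SUP (x, x') \<in> (UNIV :: ('a \<times> ('a \<Rightarrow>\<^sub>L real)) set).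
       ereal (blinfun_apply y' x + blinfun_apply y'' x') - fitz G x x')"

definition fitz_ext :: "('a::real_normed_vector \<times> ('a \<Rightarrow>\<^sub>L real)) set
                     \<Rightarrow> (('a \<Rightarrow>\<^sub>L real) \<times> (('a \<Rightarrow>\<^sub>L real) \<Rightarrow>\<^sub>L real)) set" where
  "fitz_ext G = {(y', y''). fitz_conj G y' y'' = ereal (blinfun_apply y'' y')}"

end

theory Submission
  imports Defs
begin

lemma canon_apply: "blinfun_apply (canon x) f = blinfun_apply f x"
  unfolding canon_def by (simp add: bounded_linear_Blinfun_apply blinfun.bounded_linear_left)

lemma fitz_lower:
  assumes "(t, t') \<in> G"
  shows "ereal (blinfun_apply z' t + blinfun_apply t' z - blinfun_apply t' t) \<le> fitz G z z'"
  unfolding fitz_def using assms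
  by (metis (no_types, lifting) SUP_upper fst_conv snd_conv)

lemma fitz_graph:
  assumes mono: "monotone_graph G" and sG: "(s, s') \<in> G"
  shows "fitz G s s' = ereal (blinfun_apply s' s)"
proof (rule antisym)
  show "fitz G s s' \<le> ereal (blinfun_apply s' s)"
    unfolding fitz_def
  proof (rule SUP_least)
    fix p assume pG: "p \<in> G"
    obtain t t' where p: "p = (t, t')" by (cases p)
    have "blinfun_apply (s' - t') (s - t) \<ge> 0"
      using mono sG pG p unfolding monotone_graph_def by fastforce
    then have "blinfun_apply s' t + blinfun_apply t' s - blinfun_apply t' t \<le> blinfun_apply s' s"
      by (simp add: blinfun.diff_left blinfun.diff_right)
    then show "ereal (blinfun_apply s' (fst p) + blinfun_apply (snd p) s - blinfun_apply (snd p) (fst p))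
        \<le> ereal (blinfun_apply s' s)" using p by simp
  qed
  show "ereal (blinfun_apply s' s) \<le> fitz G s s'"
    using fitz_lower[OF sG, of s' s] by simp
qed

lemma fitz_conj_lower:
  "ereal (blinfun_apply y' z + blinfun_apply y'' z') - fitz G z z' \<le> fitz_conj G y' y''"
  unfolding fitz_conj_def
  by (rule SUP_upper2[where i="(z, z')"]) auto

lemma close_point:
  assumes nonempty: "G \<noteq> {}" and closed: "closed G" and qd: "quasidense G"
    and rel: "\<forall>(s, s') \<in> G. blinfun_apply (s' - y') (s - x) \<ge> 0"
  shows "(x, y') \<in> G"
proof -
  define f where "f p = (1/2) * (norm (fst p - x))\<^sup>2 + (1/2) * (norm (snd p - y'))\<^sup>2
                       + blinfun_apply (snd p - y') (fst p - x)" for p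
  have inf: "(INF p\<in>G. f p) \<le> 0" using qd unfolding quasidense_def f_def by blast
  have fge: "f p \<ge> (1/2) * ((norm (fst p - x))\<^sup>2 + (norm (snd p - y'))\<^sup>2)" if "p \<in> G" for p
  proof -
    obtain a b where ab: "p = (a, b)" by (cases p)
    have "blinfun_apply (b - y') (a - x) \<ge> 0" using rel that ab by blast
    then show ?thesis unfolding f_def ab by (simp add: distrib_left)
  qed
  have bdd: "bdd_below (f ` G)"
  proof
    fix y assume "y \<in> f ` G"
    then obtain p where "p \<in> G" "y = f p" by auto
    moreover have "0 \<le> (1/2) * ((norm (fst p - x))\<^sup>2 + (norm (snd p - y'))\<^sup>2)" by simp
    ultimately show "0 \<le> y" using fge[of p] by linarith
  qed
  have "\<forall>e>0. \<exists>p\<in>G. dist p (x, y') < e"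
  proof (intro allI impI)
    fix e :: real assume e: "e > 0"
    have "(INF p\<in>G. f p) < e\<^sup>2 / 2" using inf e by (smt (verit) zero_less_power divide_pos_pos)
    then obtain p where pG: "p \<in> G" and fp: "f p < e\<^sup>2 / 2"
      using cINF_less_iff[OF nonempty bdd] by blast
    have "(norm (fst p - x))\<^sup>2 + (norm (snd p - y'))\<^sup>2 < e\<^sup>2"
      using fge[OF pG] fp by (simp add: field_simps)
    moreover obtain a b where ab: "p = (a, b)" by (cases p)
    ultimately have "(dist a x)\<^sup>2 + (dist b y')\<^sup>2 < e\<^sup>2" by (simp add: dist_norm)
    then have "sqrt ((dist a x)\<^sup>2 + (dist b y')\<^sup>2) < e"
      using e by (metis abs_of_pos real_sqrt_abs real_sqrt_less_iff)
    then have "dist (a, b) (x, y') < e" by (metis dist_Pair_Pair)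
    then show "\<exists>p\<in>G. dist p (x, y') < e" using pG ab by blast
  qed
  then show ?thesis using closed_approachable[OF closed] by blast
qed

theorem lemma3p2:
  fixes G :: "('a::banach \<times> ('a \<Rightarrow>\<^sub>L real)) set"
  assumes nonzero: "\<exists>x::'a. x \<noteq> 0"
    and nonempty: "G \<noteq> {}"
    and closed: "closed G"
    and mono: "monotone_graph G"
    and qd: "quasidense G"
    and range: "snd ` fitz_ext G \<subseteq> range canon"
  shows "fitz_ext G = {(x', canon x) | x x'. (x, x') \<in> G}"
proof (rule set_eqI, rule iffI)
  fix q assume qF: "q \<in> fitz_ext G"
  obtain y' y'' where q: "q = (y', y'')" by (cases q)
  from range qF q obtain x where y'': "y'' = canon x" by force
  have eq: "fitz_conj G y' y'' = ereal (blinfun_apply y' x)"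
    using qF q y'' unfolding fitz_ext_def by (simp add: canon_apply)
  have "\<forall>(s, s') \<in> G. blinfun_apply (s' - y') (s - x) \<ge> 0"
  proof (clarify)
    fix s s' assume sG: "(s, s') \<in> G"
    have "ereal (blinfun_apply y' s + blinfun_apply y'' s') - fitz G s s' \<le> ereal (blinfun_apply y' x)"
      using fitz_conj_lower[of y' s y'' s' G] eq by simp
    then have "blinfun_apply y' s + blinfun_apply s' x - blinfun_apply s' s \<le> blinfun_apply y' x"
      using fitz_graph[OF mono sG] y'' by (simp add: canon_apply)
    then show "0 \<le> blinfun_apply (s' - y') (s - x)"
      by (simp add: blinfun.diff_left blinfun.diff_right)
  qed
  then have "(x, y') \<in> G" using close_point[OF nonempty closed qd] by blast
  then show "q \<in> {(x', canon x) | x x'. (x, x') \<in> G}" using q y'' by blast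
next
  fix q assume "q \<in> {(x', canon x) | x x'. (x, x') \<in> G}"
  then obtain x x' where q: "q = (x', canon x)" and xG: "(x, x') \<in> G" by blast
  have up: "fitz_conj G x' (canon x) \<le> ereal (blinfun_apply x' x)"
    unfolding fitz_conj_def
  proof (rule SUP_least, clarify)
    fix z z'
    have "ereal (blinfun_apply z' x + blinfun_apply x' z - blinfun_apply x' x) \<le> fitz G z z'"
      by (rule fitz_lower[OF xG])
    then show "ereal (blinfun_apply x' z + blinfun_apply (canon x) z') - fitz G z z'
        \<le> ereal (blinfun_apply x' x)"
      by (cases "fitz G z z'") (auto simp: canon_apply)
  qed
  have "ereal (blinfun_apply x' x + blinfun_apply (canon x) x') - fitz G x x' \<le> fitz_conj G x' (canon x)"
    by (rule fitz_conj_lower)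
  then have lo: "ereal (blinfun_apply x' x) \<le> fitz_conj G x' (canon x)"
    using fitz_graph[OF mono xG] by (simp add: canon_apply)
  from up lo show "q \<in> fitz_ext G" unfolding fitz_ext_def q
    by (simp add: canon_apply)
qed

end
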